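(* Let $G$ be a finite connected multigraph and $D\in\operatorname{Div}(G)$. Then the limit $\lim_{\ell\to\infty} r(\ell D)/\ell$ exists (and hence equals $\operatorname{vol}^{\mathbb{T}}_G(D)$).
   Context: A multigraph allows loops and multiple edges; $G$ is finite and connected. $\operatorname{Div}(G)=\bigoplus_{v\in V(G)}\mathbb{Z}v$. For $f:V(G)\to\mathbb{Z}$, $\operatorname{div}(f)=\sum_v\big(\sum_{e\text{ non-loop edge joining }v\text{ to }w}(f(v)-f(w))\big)v$; $D\sim D'$ iff $D-D'$ is principal. $|D|=\{D'\ge 0: D'\sim D\}$. Baker--Norine rank: $r(D)=-1$ if $|D|=\varnothing$, otherwise $r(D)=\max\{d: |D-E|\ne\varnothing\ \forall E\ge 0,\ \deg E=d\}$. The tropical volume is $\operatorname{vol}^{\mathbb{T}}_G(D)=\limsup_{\ell\to\infty} r(\ell D)/\ell$. *)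

theory Defs
  imports "HOL-Analysis.Analysis"
begin

text \<open>A finite multigraph: vertex set V, edge set E, each edge e has endpoints
  src e and tgt e (orientation irrelevant; loops allowed when src e = tgt e,
  parallel edges allowed since distinct edges may share endpoints).\<close>

definition multigraph :: "'v set \<Rightarrow> 'e set \<Rightarrow> ('e \<Rightarrow> 'v) \<Rightarrow> ('e \<Rightarrow> 'v) \<Rightarrow> bool" where
  "multigraph V E src tgt \<longleftrightarrow> finite V \<and> finite E \<and> (\<forall>e\<in>E. src e \<in> V \<and> tgt e \<in> V)"

definition connected_mg :: "'v set \<Rightarrow> 'e set \<Rightarrow> ('e \<Rightarrow> 'v) \<Rightarrow> ('e \<Rightarrow> 'v) \<Rightarrow> bool" where
  "connected_mg V E src tgt \<longleftrightarrow> V \<noteq> {} \<and>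
     (\<forall>u\<in>V. \<forall>w\<in>V. (u, w) \<in> ({(src e, tgt e) | e. e \<in> E} \<union> {(tgt e, src e) | e. e \<in> E})\<^sup>*)"

definition is_divisor :: "'v set \<Rightarrow> ('v \<Rightarrow> int) \<Rightarrow> bool" where
  "is_divisor V D \<longleftrightarrow> (\<forall>v. v \<notin> V \<longrightarrow> D v = 0)"

definition deg :: "'v set \<Rightarrow> ('v \<Rightarrow> int) \<Rightarrow> int" where
  "deg V D = (\<Sum>v\<in>V. D v)"

definition effective :: "('v \<Rightarrow> int) \<Rightarrow> bool" where
  "effective D \<longleftrightarrow> (\<forall>v. D v \<ge> 0)"

definition divf :: "'v set \<Rightarrow> 'e set \<Rightarrow> ('e \<Rightarrow> 'v) \<Rightarrow> ('e \<Rightarrow> 'v) \<Rightarrow> ('v \<Rightarrow> int) \<Rightarrow> 'v \<Rightarrow> int" where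
  "divf V E src tgt f v =
     (if v \<in> V then
        (\<Sum>e\<in>{e\<in>E. src e = v \<and> tgt e \<noteq> v}. f v - f (tgt e)) +
        (\<Sum>e\<in>{e\<in>E. tgt e = v \<and> src e \<noteq> v}. f v - f (src e))
      else 0)"

definition lin_equiv :: "'v set \<Rightarrow> 'e set \<Rightarrow> ('e \<Rightarrow> 'v) \<Rightarrow> ('e \<Rightarrow> 'v) \<Rightarrow> ('v \<Rightarrow> int) \<Rightarrow> ('v \<Rightarrow> int) \<Rightarrow> bool" where
  "lin_equiv V E src tgt D D' \<longleftrightarrow> (\<exists>f. (\<lambda>v. D v - D' v) = divf V E src tgt f)"

definition linsys_nonempty :: "'v set \<Rightarrow> 'e set \<Rightarrow> ('e \<Rightarrow> 'v) \<Rightarrow> ('e \<Rightarrow> 'v) \<Rightarrow> ('v \<Rightarrow> int) \<Rightarrow> bool" where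
  "linsys_nonempty V E src tgt D \<longleftrightarrow>
     (\<exists>D'. is_divisor V D' \<and> effective D' \<and> lin_equiv V E src tgt D' D)"

definition bn_rank :: "'v set \<Rightarrow> 'e set \<Rightarrow> ('e \<Rightarrow> 'v) \<Rightarrow> ('e \<Rightarrow> 'v) \<Rightarrow> ('v \<Rightarrow> int) \<Rightarrow> int" where
  "bn_rank V E src tgt D =
     (if \<not> linsys_nonempty V E src tgt D then -1
      else int (GREATEST d::nat. \<forall>F. is_divisor V F \<and> effective F \<and> deg V F = int d \<longrightarrow>
                 linsys_nonempty V E src tgt (\<lambda>v. D v - F v)))"

end

theory Submission
  imports Defs
begin

definition Pr :: "'v set \<Rightarrow> 'e set \<Rightarrow> ('e \<Rightarrow> 'v) \<Rightarrow> ('e \<Rightarrow> 'v) \<Rightarrow> ('v \<Rightarrow> int) \<Rightarrow> nat \<Rightarrow> bool" where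
  "Pr V E src tgt A d \<longleftrightarrow> (\<forall>F. is_divisor V F \<and> effective F \<and> deg V F = int d \<longrightarrow>
                 linsys_nonempty V E src tgt (\<lambda>v. A v - F v))"

definition pt :: "'v \<Rightarrow> int \<Rightarrow> 'v \<Rightarrow> int" where
  "pt v0 c = (\<lambda>v. if v = v0 then c else 0)"

lemma bn_rank_alt: "bn_rank V E src tgt A = (if \<not> linsys_nonempty V E src tgt A then -1
   else int (GREATEST d. Pr V E src tgt A d))"
  unfolding bn_rank_def Pr_def by simp

context
  fixes V :: "'v set" and E :: "'e set" and src tgt :: "'e \<Rightarrow> 'v"
  assumes mg: "multigraph V E src tgt"
begin

lemma finV: "finite V" and finE: "finite E" and ends: "e \<in> E \<Longrightarrow> src e \<in> V \<and> tgt e \<in> V"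
  using mg unfolding multigraph_def by auto

lemma divf_add: "divf V E src tgt (\<lambda>v. f v + g v) v = divf V E src tgt f v + divf V E src tgt g v"
proof -
  have e: "\<And>a b c d::int. a + b - (c + d) = (a - c) + (b - d)" by simp
  show ?thesis unfolding divf_def by (simp only: e sum.distrib) simp
qed

lemma deg_add: "deg V (\<lambda>v. A v + B v) = deg V A + deg V B"
  unfolding deg_def by (simp add: sum.distrib)

lemma deg_diff: "deg V (\<lambda>v. A v - B v) = deg V A - deg V B"
  unfolding deg_def by (simp add: sum_subtractf)

lemma deg_pt: "v0 \<in> V \<Longrightarrow> deg V (pt v0 c) = c"
  unfolding deg_def pt_def using finV by simp

lemma pt_div: "v0 \<in> V \<Longrightarrow> is_divisor V (pt v0 c)"
  unfolding is_divisor_def pt_def by auto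

lemma pt_eff: "c \<ge> 0 \<Longrightarrow> effective (pt v0 c)"
  unfolding effective_def pt_def by auto

lemma deg_divf: "deg V (divf V E src tgt f) = 0"
proof -
  have "deg V (divf V E src tgt f) = (\<Sum>v\<in>V. \<Sum>e\<in>E. (if src e = v \<and> tgt e \<noteq> v then f v - f (tgt e) else 0)
      + (if tgt e = v \<and> src e \<noteq> v then f v - f (src e) else 0))"
    unfolding deg_def divf_def using finE by (simp add: sum.inter_filter sum.distrib)
  also have "\<dots> = (\<Sum>e\<in>E. \<Sum>v\<in>V. (if src e = v \<and> tgt e \<noteq> v then f v - f (tgt e) else 0)
      + (if tgt e = v \<and> src e \<noteq> v then f v - f (src e) else 0))"
    by (rule sum.swap)
  also have "\<dots> = (\<Sum>e\<in>E. 0)"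
  proof (rule sum.cong)
    fix e assume e: "e \<in> E"
    have 1: "(\<Sum>v\<in>V. (if src e = v \<and> tgt e \<noteq> v then f v - f (tgt e) else 0))
        = (if tgt e \<noteq> src e then f (src e) - f (tgt e) else 0)"
    proof -
      have "(\<Sum>v\<in>V. (if src e = v \<and> tgt e \<noteq> v then f v - f (tgt e) else 0))
         = (\<Sum>v\<in>V. (if src e = v \<and> tgt e \<noteq> src e then f v - f (tgt e) else 0))"
        by (rule sum.cong) auto
      also have "\<dots> = (if tgt e \<noteq> src e then f (src e) - f (tgt e) else 0)"
        using finV ends[OF e] by (simp add: sum.delta)
      finally show ?thesis .
    qed
    have 2: "(\<Sum>v\<in>V. (if tgt e = v \<and> src e \<noteq> v then f v - f (src e) else 0))
        = (if tgt e \<noteq> src e then f (tgt e) - f (src e) else 0)"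
    proof -
      have "(\<Sum>v\<in>V. (if tgt e = v \<and> src e \<noteq> v then f v - f (src e) else 0))
         = (\<Sum>v\<in>V. (if tgt e = v \<and> tgt e \<noteq> src e then f v - f (src e) else 0))"
        by (rule sum.cong) auto
      also have "\<dots> = (if tgt e \<noteq> src e then f (tgt e) - f (src e) else 0)"
        using finV ends[OF e] by (simp add: sum.delta)
      finally show ?thesis .
    qed
    show "(\<Sum>v\<in>V. (if src e = v \<and> tgt e \<noteq> v then f v - f (tgt e) else 0)
      + (if tgt e = v \<and> src e \<noteq> v then f v - f (src e) else 0)) = 0"
      by (simp only: sum.distrib 1 2) simp
  qed simp
  finally show ?thesis by simp
qed

lemma lin_equiv_deg: "lin_equiv V E src tgt A B \<Longrightarrow> deg V A = deg V B"
proof -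
  assume "lin_equiv V E src tgt A B"
  then obtain f where f: "(\<lambda>v. A v - B v) = divf V E src tgt f" unfolding lin_equiv_def by blast
  have "deg V (\<lambda>v. A v - B v) = 0" using f deg_divf by simp
  thus ?thesis by (simp add: deg_diff)
qed

lemma eff_deg: "effective F \<Longrightarrow> deg V F \<ge> 0"
  unfolding effective_def deg_def by (simp add: sum_nonneg)

lemma linsys_add: "linsys_nonempty V E src tgt A \<Longrightarrow> linsys_nonempty V E src tgt B
   \<Longrightarrow> linsys_nonempty V E src tgt (\<lambda>v. A v + B v)"
proof -
  assume "linsys_nonempty V E src tgt A" "linsys_nonempty V E src tgt B"
  then obtain D1 D2 f1 f2 where d: "is_divisor V D1" "effective D1" "is_divisor V D2" "effective D2"
    and f1: "(\<lambda>v. D1 v - A v) = divf V E src tgt f1" and f2: "(\<lambda>v. D2 v - B v) = divf V E src tgt f2"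
    unfolding linsys_nonempty_def lin_equiv_def by blast
  have "(\<lambda>v. (D1 v + D2 v) - (A v + B v)) = divf V E src tgt (\<lambda>v. f1 v + f2 v)"
  proof
    fix v
    have "D1 v - A v = divf V E src tgt f1 v" "D2 v - B v = divf V E src tgt f2 v"
      using fun_cong[OF f1, of v] fun_cong[OF f2, of v] by auto
    thus "(D1 v + D2 v) - (A v + B v) = divf V E src tgt (\<lambda>v. f1 v + f2 v) v"
      by (simp add: divf_add)
  qed
  moreover have "is_divisor V (\<lambda>v. D1 v + D2 v)" "effective (\<lambda>v. D1 v + D2 v)"
    using d unfolding is_divisor_def effective_def by auto
  ultimately show ?thesis unfolding linsys_nonempty_def lin_equiv_def by blast
qed

lemma linsys_eff: "is_divisor V B \<Longrightarrow> effective B \<Longrightarrow> linsys_nonempty V E src tgt B"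
  unfolding linsys_nonempty_def lin_equiv_def
  by (rule exI[of _ B]) (auto intro!: exI[of _ "\<lambda>_. 0"] simp: divf_def fun_eq_iff)

lemma linsys_cong: "linsys_nonempty V E src tgt A \<Longrightarrow> A = B \<Longrightarrow> linsys_nonempty V E src tgt B"
  by simp

lemma Pr_0_iff: "Pr V E src tgt A 0 \<longleftrightarrow> linsys_nonempty V E src tgt A"
proof
  assume "Pr V E src tgt A 0"
  hence "linsys_nonempty V E src tgt (\<lambda>v. A v - (\<lambda>_. 0) v)"
    unfolding Pr_def by (elim allE[of _ "\<lambda>_. 0"]) (simp add: is_divisor_def effective_def deg_def)
  thus "linsys_nonempty V E src tgt A" by simp
next
  assume A: "linsys_nonempty V E src tgt A"
  show "Pr V E src tgt A 0" unfolding Pr_def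
  proof (intro allI impI)
    fix F assume F: "is_divisor V F \<and> effective F \<and> deg V F = int 0"
    have "\<forall>v\<in>V. F v = 0"
      using F finV sum_nonneg_eq_0_iff[of V F] unfolding effective_def deg_def by auto
    hence "F = (\<lambda>_. 0)" using F unfolding is_divisor_def by auto
    thus "linsys_nonempty V E src tgt (\<lambda>v. A v - F v)" using A by simp
  qed
qed

lemma Pr_mono:
  assumes P: "Pr V E src tgt A d" and le: "d' \<le> d" and v0: "v0 \<in> V"
  shows "Pr V E src tgt A d'"
  unfolding Pr_def
proof (intro allI impI)
  fix F assume F: "is_divisor V F \<and> effective F \<and> deg V F = int d'"
  define c where "c = int d - int d'"
  have c: "c \<ge> 0" using le c_def by simp
  let ?F' = "\<lambda>v. F v + pt v0 c v"
  have "is_divisor V ?F'" "effective ?F'" "deg V ?F' = int d"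
    using F pt_div[OF v0, of c] pt_eff[OF c, of v0] deg_pt[OF v0, of c] c_def
    unfolding is_divisor_def effective_def by (auto simp: deg_add)
  hence "linsys_nonempty V E src tgt (\<lambda>v. A v - ?F' v)" using P unfolding Pr_def by blast
  hence "linsys_nonempty V E src tgt (\<lambda>v. (A v - ?F' v) + pt v0 c v)"
    by (rule linsys_add[OF _ linsys_eff[OF pt_div[OF v0] pt_eff[OF c]]])
  thus "linsys_nonempty V E src tgt (\<lambda>v. A v - F v)" by simp
qed

lemma Pr_bound:
  assumes P: "Pr V E src tgt A d" and v0: "v0 \<in> V"
  shows "int d \<le> deg V A"
proof -
  have "linsys_nonempty V E src tgt (\<lambda>v. A v - pt v0 (int d) v)"
  proof -
    have "is_divisor V (pt v0 (int d)) \<and> effective (pt v0 (int d)) \<and> deg V (pt v0 (int d)) = int d"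
      using pt_div[OF v0] pt_eff[of "int d"] deg_pt[OF v0] by auto
    thus ?thesis using P unfolding Pr_def by blast
  qed
  then obtain D' where "effective D'" "lin_equiv V E src tgt D' (\<lambda>v. A v - pt v0 (int d) v)"
    unfolding linsys_nonempty_def by blast
  hence "0 \<le> deg V (\<lambda>v. A v - pt v0 (int d) v)" using eff_deg[of D'] lin_equiv_deg[of D'] by simp
  thus ?thesis by (simp add: deg_diff deg_pt[OF v0])
qed

lemma rank_props:
  assumes A: "linsys_nonempty V E src tgt A" and v0: "v0 \<in> V"
  shows "Pr V E src tgt A (nat (bn_rank V E src tgt A))" and "bn_rank V E src tgt A \<ge> 0"
    and "Pr V E src tgt A d \<Longrightarrow> int d \<le> bn_rank V E src tgt A"
    and "bn_rank V E src tgt A \<le> deg V A"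
proof -
  have b: "\<And>y. Pr V E src tgt A y \<Longrightarrow> y \<le> nat (deg V A)" using Pr_bound[OF _ v0] by fastforce
  have P0: "Pr V E src tgt A 0" using A Pr_0_iff by blast
  have r: "bn_rank V E src tgt A = int (GREATEST d. Pr V E src tgt A d)"
    using A by (simp add: bn_rank_alt)
  show "Pr V E src tgt A (nat (bn_rank V E src tgt A))" unfolding r
    using GreatestI_nat[of "Pr V E src tgt A" 0 "nat (deg V A)", OF P0 b] by simp
  show "bn_rank V E src tgt A \<ge> 0" unfolding r by simp
  show "Pr V E src tgt A d \<Longrightarrow> int d \<le> bn_rank V E src tgt A" unfolding r
    using Greatest_le_nat[of "Pr V E src tgt A" d "nat (deg V A)", OF _ b] by simp
  show "bn_rank V E src tgt A \<le> deg V A" unfolding r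
    using Pr_bound[OF GreatestI_nat[of "Pr V E src tgt A" 0 "nat (deg V A)", OF P0 b] v0] .
qed

lemma rank_ge_m1: "bn_rank V E src tgt A \<ge> -1"
  unfolding bn_rank_alt by simp

lemma rank_nonneg_linsys: "bn_rank V E src tgt A \<ge> 0 \<Longrightarrow> linsys_nonempty V E src tgt A"
  unfolding bn_rank_alt by (auto split: if_splits)

lemma split_eff:
  "is_divisor V F \<Longrightarrow> effective F \<Longrightarrow> deg V F = int (a + b) \<Longrightarrow>
   \<exists>F1 F2. is_divisor V F1 \<and> effective F1 \<and> deg V F1 = int a \<and>
     is_divisor V F2 \<and> effective F2 \<and> deg V F2 = int b \<and> (\<forall>v. F v = F1 v + F2 v)"
proof (induction a arbitrary: b)
  case 0
  show ?case
    by (rule exI[of _ "\<lambda>_. 0"], rule exI[of _ F]) (use 0 in \<open>auto simp: is_divisor_def effective_def deg_def\<close>)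
next
  case (Suc a)
  have "deg V F = int (a + Suc b)" using Suc.prems by simp
  then obtain F1 F2 where F: "is_divisor V F1" "effective F1" "deg V F1 = int a"
     "is_divisor V F2" "effective F2" "deg V F2 = int (Suc b)" "\<forall>v. F v = F1 v + F2 v"
    using Suc.IH Suc.prems by blast
  have "\<exists>w\<in>V. F2 w > 0"
  proof (rule ccontr)
    assume "\<not> ?thesis"
    hence "deg V F2 \<le> 0" unfolding deg_def by (simp add: sum_nonpos not_less)
    thus False using F by simp
  qed
  then obtain w where w: "w \<in> V" "F2 w > 0" by blast
  show ?case
  proof (rule exI[of _ "\<lambda>v. F1 v + pt w 1 v"], rule exI[of _ "\<lambda>v. F2 v - pt w 1 v"], intro conjI)
    show "is_divisor V (\<lambda>v. F1 v + pt w 1 v)" "is_divisor V (\<lambda>v. F2 v - pt w 1 v)"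
      using F pt_div[OF w(1), of 1] unfolding is_divisor_def by auto
    show "effective (\<lambda>v. F1 v + pt w 1 v)" "effective (\<lambda>v. F2 v - pt w 1 v)"
      using F w unfolding effective_def pt_def by auto
    show "deg V (\<lambda>v. F1 v + pt w 1 v) = int (Suc a)" "deg V (\<lambda>v. F2 v - pt w 1 v) = int b"
      using F by (simp_all add: deg_add deg_diff deg_pt[OF w(1)])
    show "\<forall>v. F v = F1 v + pt w 1 v + (F2 v - pt w 1 v)" using F by simp
  qed
qed

lemma Pr_super:
  assumes "Pr V E src tgt A a" "Pr V E src tgt B b"
  shows "Pr V E src tgt (\<lambda>v. A v + B v) (a + b)"
  unfolding Pr_def
proof (intro allI impI)
  fix F assume "is_divisor V F \<and> effective F \<and> deg V F = int (a + b)"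
  then obtain F1 F2 where F: "is_divisor V F1" "effective F1" "deg V F1 = int a"
     "is_divisor V F2" "effective F2" "deg V F2 = int b" "\<forall>v. F v = F1 v + F2 v"
    using split_eff by blast
  have "linsys_nonempty V E src tgt (\<lambda>v. (A v - F1 v) + (B v - F2 v))"
    using assms F unfolding Pr_def by (intro linsys_add) auto
  thus "linsys_nonempty V E src tgt (\<lambda>v. A v + B v - F v)" using F(7)
    by (simp add: algebra_simps)
qed

lemma Pr_perturb:
  assumes P: "Pr V E src tgt A d" and B: "is_divisor V B" and N: "is_divisor V N" "effective N"
    and BN: "effective (\<lambda>v. B v + N v)" and dN: "deg V N = int n" and le: "n \<le> d"
  shows "Pr V E src tgt (\<lambda>v. A v + B v) (d - n)"
  unfolding Pr_def
proof (intro allI impI)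
  fix F assume F: "is_divisor V F \<and> effective F \<and> deg V F = int (d - n)"
  have "is_divisor V (\<lambda>v. F v + N v)" "effective (\<lambda>v. F v + N v)" "deg V (\<lambda>v. F v + N v) = int d"
    using F N dN le unfolding is_divisor_def effective_def by (auto simp: deg_add)
  hence "linsys_nonempty V E src tgt (\<lambda>v. A v - (F v + N v))" using P unfolding Pr_def by blast
  moreover have "linsys_nonempty V E src tgt (\<lambda>v. B v + N v)"
    using BN B N by (intro linsys_eff) (auto simp: is_divisor_def)
  ultimately have "linsys_nonempty V E src tgt (\<lambda>v. A v - (F v + N v) + (B v + N v))"
    by (rule linsys_add)
  thus "linsys_nonempty V E src tgt (\<lambda>v. A v + B v - F v)" by (simp add: algebra_simps)
qed

lemma rank_super:
  assumes v0: "v0 \<in> V" and a: "bn_rank V E src tgt A \<ge> 0" and b: "bn_rank V E src tgt B \<ge> 0"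
  shows "bn_rank V E src tgt (\<lambda>v. A v + B v) \<ge> bn_rank V E src tgt A + bn_rank V E src tgt B"
proof -
  have LA: "linsys_nonempty V E src tgt A" and LB: "linsys_nonempty V E src tgt B"
    using a b rank_nonneg_linsys by auto
  have P: "Pr V E src tgt (\<lambda>v. A v + B v) (nat (bn_rank V E src tgt A) + nat (bn_rank V E src tgt B))"
    by (rule Pr_super[OF rank_props(1)[OF LA v0] rank_props(1)[OF LB v0]])
  hence "linsys_nonempty V E src tgt (\<lambda>v. A v + B v)" using Pr_mono[OF P _ v0, of 0] Pr_0_iff by simp
  from rank_props(3)[OF this v0 P] show ?thesis using a b by simp
qed

lemma rank_perturb:
  assumes v0: "v0 \<in> V" and B: "is_divisor V B" and N: "is_divisor V N" "effective N"
    and BN: "effective (\<lambda>v. B v + N v)"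
  shows "bn_rank V E src tgt (\<lambda>v. A v + B v) \<ge> bn_rank V E src tgt A - deg V N"
proof (cases "bn_rank V E src tgt A \<ge> deg V N")
  case False
  thus ?thesis using rank_ge_m1[of "\<lambda>v. A v + B v"] by simp
next
  case True
  have dN: "deg V N \<ge> 0" using eff_deg N by simp
  hence ra: "bn_rank V E src tgt A \<ge> 0" using True by simp
  hence LA: "linsys_nonempty V E src tgt A" using rank_nonneg_linsys by simp
  have P: "Pr V E src tgt (\<lambda>v. A v + B v) (nat (bn_rank V E src tgt A) - nat (deg V N))"
    using Pr_perturb[OF rank_props(1)[OF LA v0] B N BN, of "nat (deg V N)"] dN True by simp
  hence "linsys_nonempty V E src tgt (\<lambda>v. A v + B v)" using Pr_mono[OF P _ v0, of 0] Pr_0_iff by simp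
  from rank_props(3)[OF this v0 P] show ?thesis using True dN by simp
qed

end

lemma seq_conv:
  fixes b :: "nat \<Rightarrow> int" and c M :: int
  assumes b0: "b 0 \<ge> 0" and bm1: "\<And>n. b n \<ge> -1"
    and sup: "\<And>m n. b m \<ge> 0 \<Longrightarrow> b n \<ge> 0 \<Longrightarrow> b (m + n) \<ge> b m + b n"
    and pert: "\<And>m s. b (m + s) \<ge> b m - int s * c"
    and ub: "\<And>n. n \<ge> 1 \<Longrightarrow> b n \<le> int n * M"
    and c0: "c \<ge> 0"
  shows "convergent (\<lambda>n. real_of_int (b n) / real n)"
proof (cases "\<exists>k\<ge>1. b k \<ge> 0")
  case False
  have bn: "b n = -1" if "n \<ge> 1" for n using bm1[of n] False that by force
  have eq: "(\<lambda>n. real_of_int (b n) / real n) = (\<lambda>n. - inverse (real n))"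
  proof
    fix n show "real_of_int (b n) / real n = - inverse (real n)"
      using bn[of n] by (cases "n = 0") (auto simp: inverse_eq_divide)
  qed
  have "(\<lambda>n. - inverse (real n)) \<longlonglongrightarrow> - 0" by (intro tendsto_minus lim_inverse_n)
  thus ?thesis unfolding eq convergent_def by auto
next
  case True
  then obtain k0 where k0: "k0 \<ge> 1" "b k0 \<ge> 0" by auto
  define a where "a = (\<lambda>n. real_of_int (b n) / real n)"
  define T where "T = {a k | k. k \<ge> 1 \<and> b k \<ge> 0}"
  have Tne: "T \<noteq> {}" using k0 T_def by auto
  have a_ub: "a n \<le> M" if "n \<ge> 1" for n
  proof -
    have "real_of_int (b n) \<le> real n * real_of_int M" using ub[OF that]
      by (metis of_int_le_iff of_int_mult of_int_of_nat_eq)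
    thus ?thesis unfolding a_def using that by (simp add: pos_divide_le_eq mult.commute)
  qed
  have bdd: "bdd_above T"
  proof (rule bdd_aboveI[of _ "real_of_int M"])
    fix x assume "x \<in> T" thus "x \<le> real_of_int M" using a_ub T_def by auto
  qed
  define \<sigma> where "\<sigma> = Sup T"
  have ak0: "a k0 \<ge> 0" unfolding a_def using k0 by simp
  have s0: "\<sigma> \<ge> 0"
  proof -
    have "a k0 \<in> T" using k0 T_def by auto
    hence "a k0 \<le> \<sigma>" unfolding \<sigma>_def using bdd by (rule cSup_upper)
    thus ?thesis using ak0 by simp
  qed
  have a_le: "a n \<le> \<sigma>" if "n \<ge> 1" for n
  proof (cases "b n \<ge> 0")
    case True
    hence "a n \<in> T" using that T_def by auto
    thus ?thesis unfolding \<sigma>_def using bdd by (rule cSup_upper)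
  next
    case False
    hence "a n < 0" unfolding a_def using that by (simp add: divide_neg_pos)
    thus ?thesis using s0 by simp
  qed
  have mult: "b (q * k) \<ge> int q * b k" if "b k \<ge> 0" for q k
  proof (induction q)
    case 0 thus ?case using b0 by simp
  next
    case (Suc q)
    have "int q * b k \<ge> 0" using that by simp
    hence "b (k + q * k) \<ge> b k + b (q * k)" using sup[OF that] Suc.IH by simp
    thus ?case using Suc.IH by (simp add: algebra_simps)
  qed
  have "a \<longlonglongrightarrow> \<sigma>"
  proof (rule LIMSEQ_I)
    fix r :: real assume r: "r > 0"
    have "\<sigma> - r/2 < Sup T" using r \<sigma>_def by simp
    then obtain k where k: "k \<ge> 1" "b k \<ge> 0" "a k > \<sigma> - r/2"
      using less_cSup_iff[OF Tne bdd] T_def by auto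
    define K where "K = real_of_int (b k) + real k * real_of_int c"
    have K0: "K \<ge> 0" using k c0 K_def by simp
    obtain N0 :: nat where N0: "real N0 > 2 * K / r" using reals_Archimedean2 by blast
    show "\<exists>no. \<forall>n\<ge>no. norm (a n - \<sigma>) < r"
    proof (intro exI allI impI)
      fix n assume n: "n \<ge> max k N0"
      have n1: "n \<ge> 1" "n \<ge> k" "n \<ge> N0" using n k by auto
      define q where "q = n div k"
      define s where "s = n mod k"
      have nqs: "n = q * k + s" unfolding q_def s_def by simp
      have sk: "s < k" unfolding s_def using k by simp
      have "b n \<ge> b (q * k) - int s * c" using pert[of "q * k" s] nqs by simp
      moreover have "int s * c \<le> int k * c" using sk c0 by (simp add: mult_right_mono)
      ultimately have "b n \<ge> int q * b k - int k * c" using mult[OF k(2), of q] by linarith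
      hence "real_of_int (int q * b k - int k * c) \<le> real_of_int (b n)" by (simp only: of_int_le_iff)
      hence b1: "real_of_int (b n) \<ge> real q * real_of_int (b k) - real k * real_of_int c"
        by simp
      have qk: "real q * real k \<ge> real n - real k"
      proof -
        have "n \<le> q * k + k" using nqs sk by simp
        hence "real n \<le> real (q * k + k)" by (simp only: of_nat_le_iff)
        hence "real n \<le> real q * real k + real k" by simp
        thus ?thesis by simp
      qed
      have akdef: "real_of_int (b k) = real k * a k" unfolding a_def using k by simp
      have ak_nn: "a k \<ge> 0" unfolding a_def using k by simp
      have "real q * real_of_int (b k) = (real q * real k) * a k" using akdef by simp
      also have "\<dots> \<ge> (real n - real k) * a k" using qk ak_nn by (rule mult_right_mono)
      finally have "real q * real_of_int (b k) \<ge> real n * a k - real_of_int (b k)"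
        using akdef by (simp add: algebra_simps)
      hence b2: "real_of_int (b n) \<ge> real n * a k - K" using b1 K_def by simp
      have npos: "real n > 0" using n1 by simp
      have "a n = real_of_int (b n) / real n" unfolding a_def by simp
      hence "a n \<ge> (real n * a k - K) / real n" using b2 npos by (simp add: divide_right_mono)
      hence an: "a n \<ge> a k - K / real n" using npos by (simp add: diff_divide_distrib)
      have "real N0 \<le> real n" using n1 by simp
      hence "2 * K / r < real n" using N0 by linarith
      hence "2 * K < real n * r" using r by (simp add: divide_less_eq mult.commute)
      hence "K / real n < r / 2" using npos by (simp add: divide_less_eq field_simps)
      hence "a n > \<sigma> - r" using an k(3) by linarith
      moreover have "a n \<le> \<sigma>" using a_le n1 by simp
      ultimately show "norm (a n - \<sigma>) < r" by simp
    qed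
  qed
  thus ?thesis unfolding convergent_def a_def by blast
qed

theorem mainTheorem4:
  fixes V :: "'v set" and E :: "'e set" and src tgt :: "'e \<Rightarrow> 'v" and D :: "'v \<Rightarrow> int"
  assumes "multigraph V E src tgt"
    and "connected_mg V E src tgt"
    and "is_divisor V D"
  shows "convergent (\<lambda>l::nat. real_of_int (bn_rank V E src tgt (\<lambda>v. int l * D v)) / real l)"
proof -
  note mg = assms(1)
  from assms(2) obtain v0 where v0: "v0 \<in> V" unfolding connected_mg_def by auto
  define b where "b = (\<lambda>l::nat. bn_rank V E src tgt (\<lambda>v. int l * D v))"
  define Dm where "Dm = (\<lambda>v. max 0 (- D v))"
  define c where "c = deg V Dm"
  define M where "M = \<bar>deg V D\<bar>"
  have Dm_div: "is_divisor V Dm" using assms(3) unfolding Dm_def is_divisor_def by auto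
  have Dm_eff: "effective Dm" unfolding Dm_def effective_def by auto
  have degs: "deg V (\<lambda>v. int s * X v) = int s * deg V X" for s X
    unfolding deg_def by (simp add: sum_distrib_left)
  have "convergent (\<lambda>n. real_of_int (b n) / real n)"
  proof (rule seq_conv[where c=c and M=M])
    have "linsys_nonempty V E src tgt (\<lambda>v. 0)"
      by (rule linsys_eff[OF mg]) (auto simp: is_divisor_def effective_def)
    from rank_props(2)[OF mg this v0] show "b 0 \<ge> 0" unfolding b_def by simp
  next
    show "\<And>n. b n \<ge> -1" unfolding b_def using rank_ge_m1[OF mg] by blast
  next
    fix m n assume "b m \<ge> 0" "b n \<ge> 0"
    moreover have "(\<lambda>v. int (m + n) * D v) = (\<lambda>v. int m * D v + int n * D v)"
      by (simp add: algebra_simps)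
    ultimately show "b (m + n) \<ge> b m + b n" unfolding b_def
      using rank_super[OF mg v0] by simp
  next
    fix m s
    have eq: "(\<lambda>v. int (m + s) * D v) = (\<lambda>v. int m * D v + int s * D v)"
      by (simp add: algebra_simps)
    have "is_divisor V (\<lambda>v. int s * D v)" using assms(3) unfolding is_divisor_def by auto
    moreover have "is_divisor V (\<lambda>v. int s * Dm v)" using Dm_div unfolding is_divisor_def by auto
    moreover have "effective (\<lambda>v. int s * Dm v)" using Dm_eff unfolding effective_def by auto
    moreover have "effective (\<lambda>v. int s * D v + int s * Dm v)"
      unfolding effective_def
    proof
      fix v
      have "int s * D v + int s * Dm v = int s * (D v + Dm v)" by (simp add: algebra_simps)
      moreover have "D v + Dm v \<ge> 0" unfolding Dm_def by auto
      ultimately show "int s * D v + int s * Dm v \<ge> 0" by simp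
    qed
    ultimately have "bn_rank V E src tgt (\<lambda>v. int m * D v + int s * D v)
       \<ge> bn_rank V E src tgt (\<lambda>v. int m * D v) - deg V (\<lambda>v. int s * Dm v)"
      by (rule rank_perturb[OF mg v0])
    thus "b (m + s) \<ge> b m - int s * c" unfolding b_def c_def eq degs .
  next
    fix n :: nat assume n: "n \<ge> 1"
    show "b n \<le> int n * M"
    proof (cases "linsys_nonempty V E src tgt (\<lambda>v. int n * D v)")
      case True
      have "b n \<le> int n * deg V D" unfolding b_def using rank_props(4)[OF mg True v0] degs by simp
      also have "\<dots> \<le> int n * M" unfolding M_def by (simp add: mult_left_mono)
      finally show ?thesis .
    next
      case False
      hence "b n = -1" unfolding b_def by (simp add: bn_rank_alt)
      moreover have "int n * M \<ge> 0" unfolding M_def by simp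
      ultimately show ?thesis by simp
    qed
  next
    show "c \<ge> 0" unfolding c_def using eff_deg[OF mg Dm_eff] .
  qed
  thus ?thesis unfolding b_def .
qed

end
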